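(* Let $(X,Y,\phi)$ be an $L$-context and $X'\subseteq X$. The following are equivalent: (i) $X\setminus X'$ is $\phi$-reducible in RST, i.e. for every $\mu\in L^X$ there is $\mu'\in L^{X'}$ with $\phi^\exists\mu=(\phi_{X',Y})^\exists\mu'$; (ii) $\phi^\exists\mu=(\phi_{X',Y})^\exists\big((\phi^\forall\phi^\exists\mu)_{X'}\big)$ for all $\mu\in L^X$; (iii) $\phi^\exists\phi^\forall=(\phi_{X',Y})^\exists(\phi_{X',Y})^\forall$ as maps $L^Y\to L^Y$; (iv) the map $\mathcal{K}\phi_{X',Y}\to\mathcal{K}\phi$, $\mu'\mapsto\phi^\forall\phi^\exists\underline{\mu'}$, is surjective (and hence an isomorphism of complete $L$-lattices).
   Context: $L=(L,* )$ is a complete residuated lattice: a complete lattice with bottom $0$ and top $1$, equipped with a commutative associative operation $*$ with unit $1$ satisfying $a*\bigvee_i b_i=\bigvee_i a*b_i$; $\to$ is its residuum ($a*b\le c\iff a\le b\to c$). An $L$-context is a triple $(X,Y,\phi)$ with $X,Y$ sets and $\phi\colon X\times Y\to L$. $L^X$ is the set of maps $X\to L$ with $L$-order $L^X(\mu,\mu')=\bigwedge_{x}(\mu(x)\to\mu'(x))$. $(\phi^\exists\mu)(y)=\bigvee_{x\in X}\mu(x)*\phi(x,y)$, $(\phi^\forall\lambda)(x)=\bigwedge_{y\in Y}(\phi(x,y)\to\lambda(y))$. $\mathcal{K}\phi=\{\mu\in L^X\mid\phi^\forall\phi^\exists\mu=\mu\}$ with the inherited $L$-order. $\phi_{X',Y}$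 is the restriction of $\phi$ to $X'\times Y$; $\mu_{X'}$ the restriction of $\mu\in L^X$ to $X'$; $\underline{\mu'}\in L^X$ the extension of $\mu'\in L^{X'}$ by $0$ outside $X'$. An isomorphism of complete $L$-lattices is an $L$-isometric bijection. *)

theory Defs
  imports Main
begin

text \<open>Complete residuated lattice on a complete lattice type 'l:
  bottom = bot (0), top = top (1), multiplication m (the operation *),
  residuum r (written a \<rightarrow> b as r a b).\<close>
definition complete_residuated_lattice ::
  "('l::complete_lattice \<Rightarrow> 'l \<Rightarrow> 'l) \<Rightarrow> ('l \<Rightarrow> 'l \<Rightarrow> 'l) \<Rightarrow> bool" where
  "complete_residuated_lattice m r \<longleftrightarrow>
     (\<forall>a b. m a b = m b a) \<and>
     (\<forall>a b c. m (m a b) c = m a (m b c)) \<and>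
     (\<forall>a. m a top = a) \<and>
     (\<forall>a B. m a (Sup B) = Sup (m a ` B)) \<and>
     (\<forall>a b c. m a b \<le> c \<longleftrightarrow> a \<le> r b c)"

text \<open>L^A for a set A: maps represented as functions vanishing (= bot) outside A.\<close>
definition Lfun :: "'a set \<Rightarrow> ('a \<Rightarrow> 'l::complete_lattice) set" where
  "Lfun A = {\<mu>. \<forall>x. x \<notin> A \<longrightarrow> \<mu> x = bot}"

definition ext_op ::
  "('l::complete_lattice \<Rightarrow> 'l \<Rightarrow> 'l) \<Rightarrow> ('x \<Rightarrow> 'y \<Rightarrow> 'l) \<Rightarrow> 'x set \<Rightarrow> 'y set
     \<Rightarrow> ('x \<Rightarrow> 'l) \<Rightarrow> ('y \<Rightarrow> 'l)" where
  "ext_op m \<phi> A B \<mu> = (\<lambda>y. if y \<in> B then (SUP x\<in>A. m (\<mu> x) (\<phi> x y)) else bot)"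

definition univ_op ::
  "('l::complete_lattice \<Rightarrow> 'l \<Rightarrow> 'l) \<Rightarrow> ('x \<Rightarrow> 'y \<Rightarrow> 'l) \<Rightarrow> 'x set \<Rightarrow> 'y set
     \<Rightarrow> ('y \<Rightarrow> 'l) \<Rightarrow> ('x \<Rightarrow> 'l)" where
  "univ_op r \<phi> A B \<psi> = (\<lambda>x. if x \<in> A then (INF y\<in>B. r (\<phi> x y) (\<psi> y)) else bot)"

text \<open>Restriction of mu to A (represented by extension with bot outside A).\<close>
definition restr :: "'a set \<Rightarrow> ('a \<Rightarrow> 'l::complete_lattice) \<Rightarrow> ('a \<Rightarrow> 'l)" where
  "restr A \<mu> = (\<lambda>x. if x \<in> A then \<mu> x else bot)"

definition Kset ::
  "('l::complete_lattice \<Rightarrow> 'l \<Rightarrow> 'l) \<Rightarrow> ('l \<Rightarrow> 'l \<Rightarrow> 'l) \<Rightarrow> ('x \<Rightarrow> 'y \<Rightarrow> 'l)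
     \<Rightarrow> 'x set \<Rightarrow> 'y set \<Rightarrow> ('x \<Rightarrow> 'l) set" where
  "Kset m r \<phi> A B = {\<mu> \<in> Lfun A. univ_op r \<phi> A B (ext_op m \<phi> A B \<mu>) = \<mu>}"

end

theory Submission
  imports Defs
begin

lemma crl_mono_m:
  assumes "complete_residuated_lattice m r" "a \<le> a'"
  shows "m a b \<le> m a' b"
proof -
  have "a' \<le> r b (m a' b)" using assms(1) unfolding complete_residuated_lattice_def by blast
  then have "a \<le> r b (m a' b)" using assms(2) by (rule order_trans[rotated])
  then show ?thesis using assms(1) unfolding complete_residuated_lattice_def by blast
qed

lemma crl_bot:
  assumes "complete_residuated_lattice m r"
  shows "m bot b = bot"
proof -
  have "bot \<le> r b bot" by simp
  then have "m bot b \<le> bot" using assms unfolding complete_residuated_lattice_def by blast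
  then show ?thesis by (simp add: bot_unique)
qed

lemma crl_mono_r:
  assumes "complete_residuated_lattice m r" "c \<le> c'"
  shows "r b c \<le> r b c'"
proof -
  have "m (r b c) b \<le> c" using assms(1) unfolding complete_residuated_lattice_def by blast
  then have "m (r b c) b \<le> c'" using assms(2) by (rule order_trans)
  then show ?thesis using assms(1) unfolding complete_residuated_lattice_def by blast
qed

lemma galois:
  assumes "complete_residuated_lattice m r"
  shows "ext_op m \<phi> X Y \<mu> \<le> \<psi> \<longleftrightarrow> restr X \<mu> \<le> univ_op r \<phi> X Y \<psi>"
proof -
  have res: "\<And>a b c. m a b \<le> c \<longleftrightarrow> a \<le> r b c"
    using assms unfolding complete_residuated_lattice_def by blast
  have "ext_op m \<phi> X Y \<mu> \<le> \<psi> \<longleftrightarrow> (\<forall>x\<in>X. \<forall>y\<in>Y. m (\<mu> x) (\<phi> x y) \<le> \<psi> y)"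
    unfolding ext_op_def le_fun_def by (auto simp: SUP_le_iff)
  also have "\<dots> \<longleftrightarrow> (\<forall>x\<in>X. \<forall>y\<in>Y. \<mu> x \<le> r (\<phi> x y) (\<psi> y))" using res by blast
  also have "\<dots> \<longleftrightarrow> restr X \<mu> \<le> univ_op r \<phi> X Y \<psi>"
    unfolding restr_def univ_op_def le_fun_def by (auto simp: le_INF_iff)
  finally show ?thesis .
qed

lemma E_restr:
  assumes "complete_residuated_lattice m r" "X' \<subseteq> X"
  shows "ext_op m \<phi> X Y (restr X' \<mu>) = ext_op m \<phi> X' Y \<mu>"
proof -
  have "\<And>y. (SUP x\<in>X. m (restr X' \<mu> x) (\<phi> x y)) = (SUP x\<in>X'. m (\<mu> x) (\<phi> x y))"
  proof (rule antisym)
    fix y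
    show "(SUP x\<in>X. m (restr X' \<mu> x) (\<phi> x y)) \<le> (SUP x\<in>X'. m (\<mu> x) (\<phi> x y))"
    proof (rule SUP_least)
      fix x assume "x \<in> X"
      show "m (restr X' \<mu> x) (\<phi> x y) \<le> (SUP x\<in>X'. m (\<mu> x) (\<phi> x y))"
        by (cases "x \<in> X'") (auto simp: restr_def crl_bot[OF assms(1)] intro: SUP_upper)
    qed
    show "(SUP x\<in>X'. m (\<mu> x) (\<phi> x y)) \<le> (SUP x\<in>X. m (restr X' \<mu> x) (\<phi> x y))"
    proof (rule SUP_least)
      fix x assume "x \<in> X'"
      then have "m (\<mu> x) (\<phi> x y) = m (restr X' \<mu> x) (\<phi> x y)" by (simp add: restr_def)
      then show "m (\<mu> x) (\<phi> x y) \<le> (SUP x\<in>X. m (restr X' \<mu> x) (\<phi> x y))"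
        using \<open>x \<in> X'\<close> assms(2) by (auto intro: SUP_upper)
    qed
  qed
  then show ?thesis unfolding ext_op_def by (simp add: fun_eq_iff)
qed

lemma E_restr_self:
  assumes "complete_residuated_lattice m r"
  shows "ext_op m \<phi> X Y (restr X \<mu>) = ext_op m \<phi> X Y \<mu>"
  using E_restr[OF assms, of X X] by simp

lemma A_restr:
  assumes "X' \<subseteq> X"
  shows "univ_op r \<phi> X' Y \<psi> = restr X' (univ_op r \<phi> X Y \<psi>)"
  using assms unfolding univ_op_def restr_def by (auto simp: fun_eq_iff)

lemma restr_Lfun: "\<mu> \<in> Lfun X \<Longrightarrow> restr X \<mu> = \<mu>"
  unfolding restr_def Lfun_def by auto

lemma restr_idem: "restr X (restr X \<mu>) = restr X \<mu>"
  unfolding restr_def by (auto simp: fun_eq_iff)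

lemma restr_in_Lfun: "restr X \<mu> \<in> Lfun X"
  unfolding restr_def Lfun_def by auto

lemma A_Lfun: "univ_op r \<phi> X Y \<psi> \<in> Lfun X"
  unfolding univ_op_def Lfun_def by auto

lemma E_Lfun: "ext_op m \<phi> X Y \<mu> \<in> Lfun Y"
  unfolding ext_op_def Lfun_def by auto

lemma restr_le: "restr X \<mu> \<le> (\<mu>::'a \<Rightarrow> 'l::complete_lattice)"
  unfolding restr_def le_fun_def by auto

lemma E_mono:
  assumes "complete_residuated_lattice m r" "\<mu> \<le> \<nu>"
  shows "ext_op m \<phi> X Y \<mu> \<le> ext_op m \<phi> X Y \<nu>"
proof -
  have "(SUP x\<in>X. m (\<mu> x) (\<phi> x y)) \<le> (SUP x\<in>X. m (\<nu> x) (\<phi> x y))" for y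
  proof (rule SUP_mono')
    fix x
    have "\<mu> x \<le> \<nu> x" using assms(2) by (simp add: le_fun_def)
    then show "m (\<mu> x) (\<phi> x y) \<le> m (\<nu> x) (\<phi> x y)" by (rule crl_mono_m[OF assms(1)])
  qed
  then show ?thesis unfolding ext_op_def le_fun_def by simp
qed

lemma A_mono:
  assumes "complete_residuated_lattice m r" "\<psi> \<le> \<psi>'"
  shows "univ_op r \<phi> X Y \<psi> \<le> univ_op r \<phi> X Y \<psi>'"
proof -
  have "(INF y\<in>Y. r (\<phi> x y) (\<psi> y)) \<le> (INF y\<in>Y. r (\<phi> x y) (\<psi>' y))" for x
  proof (rule INF_mono')
    fix y
    have "\<psi> y \<le> \<psi>' y" using assms(2) by (simp add: le_fun_def)
    then show "r (\<phi> x y) (\<psi> y) \<le> r (\<phi> x y) (\<psi>' y)" by (rule crl_mono_r[OF assms(1)])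
  qed
  then show ?thesis unfolding univ_op_def le_fun_def by simp
qed

lemma unit:
  assumes "complete_residuated_lattice m r"
  shows "restr X \<mu> \<le> univ_op r \<phi> X Y (ext_op m \<phi> X Y \<mu>)"
  using galois[OF assms] by blast

lemma counit:
  assumes "complete_residuated_lattice m r"
  shows "ext_op m \<phi> X Y (univ_op r \<phi> X Y \<psi>) \<le> \<psi>"
  using galois[OF assms] restr_Lfun[OF A_Lfun] by (metis order_refl)

lemma EAE:
  assumes "complete_residuated_lattice m r"
  shows "ext_op m \<phi> X Y (univ_op r \<phi> X Y (ext_op m \<phi> X Y \<mu>)) = ext_op m \<phi> X Y \<mu>"
  by (metis E_mono E_restr_self antisym assms counit unit)

lemma AEA:
  assumes "complete_residuated_lattice m r"
  shows "univ_op r \<phi> X Y (ext_op m \<phi> X Y (univ_op r \<phi> X Y \<psi>)) = univ_op r \<phi> X Y \<psi>"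
  by (metis A_mono A_Lfun restr_Lfun antisym assms counit unit)


theorem mainTheorem4:
  fixes m r :: "'l::complete_lattice \<Rightarrow> 'l \<Rightarrow> 'l"
    and \<phi> :: "'x \<Rightarrow> 'y \<Rightarrow> 'l"
    and X X' :: "'x set" and Y :: "'y set"
  assumes "complete_residuated_lattice m r"
    and "X' \<subseteq> X"
  defines "i \<equiv> (\<forall>\<mu>\<in>Lfun X. \<exists>\<mu>'\<in>Lfun X'. ext_op m \<phi> X Y \<mu> = ext_op m \<phi> X' Y \<mu>')"
    and "ii \<equiv> (\<forall>\<mu>\<in>Lfun X. ext_op m \<phi> X Y \<mu> =
                 ext_op m \<phi> X' Y (restr X' (univ_op r \<phi> X Y (ext_op m \<phi> X Y \<mu>))))"
    and "iii \<equiv> (\<forall>\<psi>\<in>Lfun Y. ext_op m \<phi> X Y (univ_op r \<phi> X Y \<psi>) =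
                 ext_op m \<phi> X' Y (univ_op r \<phi> X' Y \<psi>))"
    and "iv \<equiv> (Kset m r \<phi> X Y \<subseteq>
                (\<lambda>\<mu>'. univ_op r \<phi> X Y (ext_op m \<phi> X Y \<mu>')) ` Kset m r \<phi> X' Y)"
  shows "(i \<longleftrightarrow> ii) \<and> (ii \<longleftrightarrow> iii) \<and> (iii \<longleftrightarrow> iv)"
proof -
  note L = assms(1)
  define E where "E = ext_op m \<phi> X Y"
  define A where "A = univ_op r \<phi> X Y"
  define E' where "E' = ext_op m \<phi> X' Y"
  define A' where "A' = univ_op r \<phi> X' Y"
  have E'E: "E' \<mu> = E (restr X' \<mu>)" for \<mu> :: "'x \<Rightarrow> 'l"
    unfolding E'_def E_def by (rule E_restr[OF L assms(2), symmetric])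
  have A'A: "A' \<psi> = restr X' (A \<psi>)" for \<psi> :: "'y \<Rightarrow> 'l"
    unfolding A'_def A_def by (rule A_restr[OF assms(2)])
  have Em: "\<mu> \<le> \<nu> \<Longrightarrow> E \<mu> \<le> E \<nu>" for \<mu> \<nu> :: "'x \<Rightarrow> 'l" unfolding E_def using E_mono[OF L] .
  have Am: "\<psi> \<le> \<psi>' \<Longrightarrow> A \<psi> \<le> A \<psi>'" for \<psi> \<psi>' :: "'y \<Rightarrow> 'l" unfolding A_def using A_mono[OF L] .
  have un: "restr X \<mu> \<le> A (E \<mu>)" for \<mu> :: "'x \<Rightarrow> 'l" unfolding A_def E_def using unit[OF L] .
  have cu: "E (A \<psi>) \<le> \<psi>" for \<psi> :: "'y \<Rightarrow> 'l" unfolding A_def E_def using counit[OF L] .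
  have eae: "E (A (E \<mu>)) = E \<mu>" for \<mu> :: "'x \<Rightarrow> 'l" unfolding A_def E_def using EAE[OF L] .
  have aea: "A (E (A \<psi>)) = A \<psi>" for \<psi> :: "'y \<Rightarrow> 'l" unfolding A_def E_def using AEA[OF L] .
  have AL: "A \<psi> \<in> Lfun X" for \<psi> :: "'y \<Rightarrow> 'l" unfolding A_def by (rule A_Lfun)
  have EL: "E \<mu> \<in> Lfun Y" for \<mu> :: "'x \<Rightarrow> 'l" unfolding E_def by (rule E_Lfun)
  have E'L: "\<mu> \<in> Lfun X' \<Longrightarrow> E' \<mu> = E \<mu>" for \<mu> :: "'x \<Rightarrow> 'l" using E'E restr_Lfun by metis
  have Kd: "\<mu> \<in> Kset m r \<phi> X Y \<longleftrightarrow> \<mu> \<in> Lfun X \<and> A (E \<mu>) = \<mu>" for \<mu> :: "'x \<Rightarrow> 'l"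
    unfolding Kset_def A_def E_def by simp
  have Kd': "\<mu> \<in> Kset m r \<phi> X' Y \<longleftrightarrow> \<mu> \<in> Lfun X' \<and> A' (E' \<mu>) = \<mu>" for \<mu> :: "'x \<Rightarrow> 'l"
    unfolding Kset_def A'_def E'_def by simp
  have i: "i \<longleftrightarrow> (\<forall>\<mu>\<in>Lfun X. \<exists>\<mu>'\<in>Lfun X'. E \<mu> = E' \<mu>')" unfolding i_def E_def E'_def ..
  have ii: "ii \<longleftrightarrow> (\<forall>\<mu>\<in>Lfun X. E \<mu> = E' (restr X' (A (E \<mu>))))"
    unfolding ii_def E_def E'_def A_def ..
  have iii: "iii \<longleftrightarrow> (\<forall>\<psi>\<in>Lfun Y. E (A \<psi>) = E' (A' \<psi>))"
    unfolding iii_def E_def E'_def A_def A'_def ..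
  have iv: "iv \<longleftrightarrow> (\<forall>\<mu>. \<mu> \<in> Kset m r \<phi> X Y \<longrightarrow> (\<exists>\<mu>'\<in>Kset m r \<phi> X' Y. \<mu> = A (E \<mu>')))"
    unfolding iv_def E_def A_def by blast
  have 1: "i \<longleftrightarrow> ii"
  proof
    assume H: i
    show ii unfolding ii
    proof
      fix \<mu> :: "'x \<Rightarrow> 'l" assume \<mu>: "\<mu> \<in> Lfun X"
      then obtain \<mu>' where \<mu>': "\<mu>' \<in> Lfun X'" "E \<mu> = E' \<mu>'" using H i by blast
      have a: "E' (restr X' (A (E \<mu>))) \<le> E \<mu>"
      proof -
        have "E' (restr X' (A (E \<mu>))) = E (restr X' (restr X' (A (E \<mu>))))" by (rule E'E)
        also have "\<dots> \<le> E (A (E \<mu>))" by (rule Em) (meson order_trans restr_le)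
        also have "\<dots> = E \<mu>" by (rule eae)
        finally show ?thesis .
      qed
      have "restr X \<mu>' \<le> A (E \<mu>')" by (rule un)
      moreover have "restr X \<mu>' = \<mu>'" using \<mu>'(1) assms(2) unfolding restr_def Lfun_def by (auto simp: fun_eq_iff)
      moreover have "E \<mu>' = E \<mu>" using \<mu>' E'L by simp
      ultimately have "\<mu>' \<le> A (E \<mu>)" by simp
      then have "restr X' \<mu>' \<le> restr X' (A (E \<mu>))" unfolding restr_def le_fun_def by auto
      then have rr: "restr X' \<mu>' \<le> restr X' (A (E \<mu>))" .
      have "E' \<mu>' = E (restr X' \<mu>')" by (rule E'E)
      also have "\<dots> \<le> E (restr X' (A (E \<mu>)))" by (rule Em[OF rr])
      also have "\<dots> = E (restr X' (restr X' (A (E \<mu>))))" by (simp only: restr_idem)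
      also have "\<dots> = E' (restr X' (A (E \<mu>)))" by (rule E'E[symmetric])
      finally have "E' \<mu>' \<le> E' (restr X' (A (E \<mu>)))" .
      then show "E \<mu> = E' (restr X' (A (E \<mu>)))" using a \<mu>'(2) by (simp add: antisym)
    qed
  next
    assume H: ii
    show i unfolding i using H ii restr_in_Lfun by blast
  qed
  have 2: "ii \<longleftrightarrow> iii"
  proof
    assume H: ii
    show iii unfolding iii
    proof
      fix \<psi> :: "'y \<Rightarrow> 'l" assume "\<psi> \<in> Lfun Y"
      have "E (A \<psi>) = E' (restr X' (A (E (A \<psi>))))" using H ii AL by blast
      then show "E (A \<psi>) = E' (A' \<psi>)" using aea A'A by simp
    qed
  next
    assume H: iii
    show ii unfolding ii
    proof
      fix \<mu> :: "'x \<Rightarrow> 'l" assume "\<mu> \<in> Lfun X"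
      have "E (A (E \<mu>)) = E' (A' (E \<mu>))" using H iii EL by blast
      then show "E \<mu> = E' (restr X' (A (E \<mu>)))" using eae A'A by simp
    qed
  qed
  have 3: "iii \<longleftrightarrow> iv"
  proof
    assume H: iii
    show iv unfolding iv
    proof (intro allI impI)
      fix \<mu> :: "'x \<Rightarrow> 'l" assume "\<mu> \<in> Kset m r \<phi> X Y"
      then have \<mu>: "\<mu> \<in> Lfun X" "A (E \<mu>) = \<mu>" using Kd by auto
      define \<mu>' where "\<mu>' = A' (E \<mu>)"
      have "E (A (E \<mu>)) = E' (A' (E \<mu>))" using H iii EL by blast
      then have h: "E' \<mu>' = E \<mu>" by (simp add: \<mu>'_def eae)
      have L': "\<mu>' \<in> Lfun X'" unfolding \<mu>'_def A'A by (rule restr_in_Lfun)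
      have "A' (E' \<mu>') = \<mu>'" using h \<mu>'_def by simp
      then have "\<mu>' \<in> Kset m r \<phi> X' Y" using Kd' L' by simp
      moreover have "\<mu> = A (E \<mu>')" using E'L[OF L'] h \<mu> by simp
      ultimately show "\<exists>\<mu>'\<in>Kset m r \<phi> X' Y. \<mu> = A (E \<mu>')" by blast
    qed
  next
    assume H: iv
    show iii unfolding iii
    proof
      fix \<psi> :: "'y \<Rightarrow> 'l" assume "\<psi> \<in> Lfun Y"
      have "A \<psi> \<in> Kset m r \<phi> X Y" using Kd AL aea by simp
      then obtain \<mu>' where \<mu>': "\<mu>' \<in> Kset m r \<phi> X' Y" "A \<psi> = A (E \<mu>')" using H iv by blast
      then have \<mu>'L: "\<mu>' \<in> Lfun X'" and fx: "A' (E' \<mu>') = \<mu>'" using Kd' by auto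
      have "E' (A' \<psi>) = E (restr X' (A' \<psi>))" by (rule E'E)
      also have "\<dots> \<le> E (A' \<psi>)" by (rule Em[OF restr_le])
      also have "\<dots> \<le> E (A \<psi>)" unfolding A'A by (rule Em[OF restr_le])
      finally have a: "E' (A' \<psi>) \<le> E (A \<psi>)" .
      have "E (A \<psi>) = E \<mu>'" by (simp add: \<mu>'(2) eae)
      also have "\<dots> = E' \<mu>'" using E'L \<mu>'L by simp
      finally have e: "E (A \<psi>) = E' \<mu>'" .
      have "E' \<mu>' \<le> \<psi>" using cu[of \<psi>] e by simp
      then have "A (E' \<mu>') \<le> A \<psi>" by (rule Am)
      then have "A' (E' \<mu>') \<le> A' \<psi>" using A'A unfolding restr_def le_fun_def by auto
      then have "\<mu>' \<le> A' \<psi>" using fx by simp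
      then have "restr X' \<mu>' \<le> restr X' (A' \<psi>)" unfolding restr_def le_fun_def by auto
      then have "E' \<mu>' \<le> E' (A' \<psi>)" using Em by (simp only: E'E)
      then show "E (A \<psi>) = E' (A' \<psi>)" using a e by (simp add: antisym)
    qed
  qed
  show ?thesis using 1 2 3 by blast
qed

end
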